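(* Let $p$ be an odd prime and $q$ a positive integer. The complete graph $K_{qp}$ is a Legendre cordial graph modulo $p$ if and only if $q=1$ and $p=3$.
   Context: For an odd prime $p$ and an integer $a$ not divisible by $p$, $(a/p)$ denotes the Legendre symbol: $1$ if $a$ is a quadratic residue mod $p$, $-1$ otherwise. For a simple connected graph $G$ of order $n$, a bijection $f:V(G)\to\{1,\dots,n\}$ is a Legendre cordial labeling modulo $p$ if the induced edge labeling $f_p^*:E(G)\to\{0,1\}$, defined by $f_p^*(uv)=0$ if $p\mid f(u)+f(v)$ or $((f(u)+f(v))/p)=-1$, and $f_p^*(uv)=1$ if $((f(u)+f(v))/p)=1$, satisfies $|e_{f_p^*}(0)-e_{f_p^*}(1)|\le1$, where $e_{f_p^*}(i)$ is the number of edges with label $i$. A graph admitting such a labeling is a Legendre cordial graph modulo $p$. *)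

theory Defs
  imports "HOL-Number_Theory.Number_Theory"
begin

(* A simple graph is given by a finite vertex set V and a set E of edges,
   each edge being a 2-element subset {u,v} of V (u \<noteq> v). *)

definition edge_label :: "nat \<Rightarrow> ('a \<Rightarrow> nat) \<Rightarrow> 'a set \<Rightarrow> nat" where
  "edge_label p f e = (if Legendre (int (\<Sum>x\<in>e. f x)) (int p) = 1 then 1 else 0)"

definition num_edges_label :: "nat \<Rightarrow> ('a \<Rightarrow> nat) \<Rightarrow> 'a set set \<Rightarrow> nat \<Rightarrow> nat" where
  "num_edges_label p f E i = card {e \<in> E. edge_label p f e = i}"

definition legendre_cordial_labeling ::
  "nat \<Rightarrow> 'a set \<Rightarrow> 'a set set \<Rightarrow> ('a \<Rightarrow> nat) \<Rightarrow> bool" where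
  "legendre_cordial_labeling p V E f \<longleftrightarrow>
     bij_betw f V {1..card V} \<and>
     \<bar>int (num_edges_label p f E 0) - int (num_edges_label p f E 1)\<bar> \<le> 1"

definition legendre_cordial_graph :: "nat \<Rightarrow> 'a set \<Rightarrow> 'a set set \<Rightarrow> bool" where
  "legendre_cordial_graph p V E \<longleftrightarrow> (\<exists>f. legendre_cordial_labeling p V E f)"

definition complete_graph_edges :: "nat \<Rightarrow> nat set set" where
  "complete_graph_edges n = {{u, v} | u v. u \<in> {1..n} \<and> v \<in> {1..n} \<and> u \<noteq> v}"

end

theory Submission
  imports Defs
begin

lemma E_cases:
  assumes "e \<in> complete_graph_edges n"
  obtains u v where "e = {u,v}" "u \<in> {1..n}" "v \<in> {1..n}" "u \<noteq> v"
  using assms unfolding complete_graph_edges_def by blast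

lemma E_sub: "complete_graph_edges n \<subseteq> Pow {1..n}"
  unfolding complete_graph_edges_def by auto

lemma finite_E: "finite (complete_graph_edges n)"
  using E_sub by (rule finite_subset) simp

lemma image_E:
  assumes "bij_betw g {1..n} {1..n}"
  shows "image g ` complete_graph_edges n = complete_graph_edges n"
proof (rule endo_inj_surj[OF finite_E])
  have inj: "inj_on g {1..n}" using assms bij_betw_def by blast
  show "image g ` complete_graph_edges n \<subseteq> complete_graph_edges n"
  proof
    fix e' assume "e' \<in> image g ` complete_graph_edges n"
    then obtain e where e: "e \<in> complete_graph_edges n" "e' = g ` e" by blast
    from e(1) obtain u v where uv: "e = {u,v}" "u \<in> {1..n}" "v \<in> {1..n}" "u \<noteq> v"
      by (rule E_cases)
    have "g u \<noteq> g v" using inj uv by (meson inj_onD)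
    moreover have "g u \<in> {1..n}" "g v \<in> {1..n}" using assms uv by (meson bij_betw_apply)+
    moreover have "e' = {g u, g v}" using e uv by simp
    ultimately show "e' \<in> complete_graph_edges n"
      unfolding complete_graph_edges_def by blast
  qed
  show "inj_on (image g) (complete_graph_edges n)"
    by (rule inj_on_subset[OF inj_on_image_Pow[OF inj] E_sub])
qed

lemma relabel:
  assumes "bij_betw g {1..n} {1..n}"
  shows "card {e \<in> complete_graph_edges n. P (\<Sum>x\<in>e. g x)}
       = card {e \<in> complete_graph_edges n. P (\<Sum>e)}"
proof -
  let ?E = "complete_graph_edges n"
  have inj: "inj_on g {1..n}" using assms bij_betw_def by blast
  have injE: "inj_on (image g) ?E"
    by (rule inj_on_subset[OF inj_on_image_Pow[OF inj] E_sub])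
  have s: "(\<Sum>x\<in>e. g x) = \<Sum>(g ` e)" if "e \<in> ?E" for e
  proof -
    have "e \<subseteq> {1..n}" using that E_sub by blast
    then have "inj_on g e" by (rule inj_on_subset[OF inj])
    then show ?thesis by (simp add: sum.reindex)
  qed
  have "{e \<in> ?E. P (\<Sum>x\<in>e. g x)} = {e \<in> ?E. P (\<Sum>(g ` e))}"
    using s by (intro Collect_cong) (metis)
  moreover have "image g ` {e \<in> ?E. P (\<Sum>(g ` e))} = {e \<in> ?E. P (\<Sum>e)}"
  proof
    show "image g ` {e \<in> ?E. P (\<Sum>(g ` e))} \<subseteq> {e \<in> ?E. P (\<Sum>e)}"
      using image_E[OF assms] by blast
    show "{e \<in> ?E. P (\<Sum>e)} \<subseteq> image g ` {e \<in> ?E. P (\<Sum>(g ` e))}"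
    proof
      fix e' assume h: "e' \<in> {e \<in> ?E. P (\<Sum>e)}"
      then have "e' \<in> image g ` ?E" using image_E[OF assms] by simp
      then obtain e where "e \<in> ?E" "e' = g ` e" by blast
      then show "e' \<in> image g ` {e \<in> ?E. P (\<Sum>(g ` e))}" using h by blast
    qed
  qed
  moreover have "card (image g ` {e \<in> ?E. P (\<Sum>(g ` e))}) = card {e \<in> ?E. P (\<Sum>(g ` e))}"
    by (rule card_image) (rule inj_on_subset[OF injE], auto)
  ultimately show ?thesis by simp
qed

lemma shift_bij:
  assumes "n > (0::nat)"
  shows "bij_betw (\<lambda>x. (x - 1 + t) mod n + 1) {1..n} {1..n}"
proof -
  let ?s = "\<lambda>x. (x - 1 + t) mod n + 1"
  have sub: "?s ` {1..n} \<subseteq> {1..n}" using assms by (auto simp: Suc_le_eq)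
  have inj: "inj_on ?s {1..n}"
  proof
    fix x y assume xy: "x \<in> {1..n}" "y \<in> {1..n}" "?s x = ?s y"
    then have "[x - 1 + t = y - 1 + t] (mod n)" by (simp add: cong_def)
    then have "[x - 1 = y - 1] (mod n)" by (simp add: cong_add_rcancel_nat)
    moreover have "x - 1 < n" "y - 1 < n" using xy(1,2) by auto
    ultimately have "x - 1 = y - 1" by (simp add: cong_def)
    then show "x = y" using xy(1,2) by (metis atLeastAtMost_iff le_add_diff_inverse2)
  qed
  have "?s ` {1..n} = {1..n}" by (rule endo_inj_surj[OF _ sub inj]) simp
  then show ?thesis using inj by (simp add: bij_betw_def)
qed

lemma mod_shift_zero:
  fixes a p s :: nat
  assumes "s < p"
  shows "(a + (p - s)) mod p = 0 \<longleftrightarrow> a mod p = s"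
proof -
  let ?r = "a mod p"
  have r: "?r < p" using assms by simp
  have "(a + (p - s)) mod p = (?r + (p - s)) mod p" by (simp add: mod_add_left_eq)
  also have "\<dots> = 0 \<longleftrightarrow> ?r = s"
  proof (cases "s \<le> ?r")
    case True
    then have eq: "?r + (p - s) = (?r - s) + p" using assms by simp
    have "(?r + (p - s)) mod p = ((?r - s) + p) mod p" by (simp only: eq)
    also have "\<dots> = ?r - s" using r by simp
    finally have "(?r + (p - s)) mod p = ?r - s" .
    then show ?thesis using True by simp
  next
    case False
    then have "?r + (p - s) < p" "?r + (p - s) > 0" using assms by auto
    then show ?thesis using False assms by simp
  qed
  finally show ?thesis .
qed

lemma shift_mod:
  fixes p n t x :: nat
  assumes "p dvd n" "x \<ge> 1"
  shows "((x - 1 + t) mod n + 1) mod p = (x + t) mod p"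
proof -
  have "((x - 1 + t) mod n + 1) mod p = ((x - 1 + t) mod n mod p + 1) mod p"
    by (metis mod_add_left_eq)
  also have "\<dots> = ((x - 1 + t) mod p + 1) mod p" using assms(1) by (simp add: mod_mod_cancel)
  also have "\<dots> = (x - 1 + t + 1) mod p" by (metis mod_add_left_eq)
  also have "x - 1 + t + 1 = x + t" using assms(2) by simp
  finally show ?thesis .
qed

lemma uniform:
  fixes p n s :: nat
  assumes "p dvd n" "n > 0" "odd p" "s < p"
  shows "card {e \<in> complete_graph_edges n. (\<Sum>e) mod p = s}
       = card {e \<in> complete_graph_edges n. (\<Sum>e) mod p = 0}"
proof -
  define t where "t = (p - s) * ((p + 1) div 2)"
  have t2: "2 * t = (p - s) * p + (p - s)"
  proof -
    have "2 * ((p + 1) div 2) = p + 1" using assms(3) by simp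
    then show ?thesis unfolding t_def by (metis mult.left_commute add_mult_distrib2 mult.right_neutral mult.commute)
  qed
  let ?s = "\<lambda>x. (x - 1 + t) mod n + 1"
  have "card {e \<in> complete_graph_edges n. (\<Sum>e) mod p = 0}
      = card {e \<in> complete_graph_edges n. (\<Sum>x\<in>e. ?s x) mod p = 0}"
    using relabel[OF shift_bij[OF assms(2)], of "\<lambda>m. m mod p = 0" t] by simp
  also have "{e \<in> complete_graph_edges n. (\<Sum>x\<in>e. ?s x) mod p = 0}
      = {e \<in> complete_graph_edges n. (\<Sum>e) mod p = s}"
  proof (intro Collect_cong conj_cong refl)
    fix e assume "e \<in> complete_graph_edges n"
    then obtain u v where uv: "e = {u,v}" "u \<in> {1..n}" "v \<in> {1..n}" "u \<noteq> v"
      by (rule E_cases)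
    have eq: "u + t + (v + t) = u + v + (p - s) + p * (p - s)"
      using t2 by (simp add: algebra_simps)
    have "(\<Sum>x\<in>e. ?s x) mod p = (?s u + ?s v) mod p" using uv by simp
    also have "\<dots> = (?s u mod p + ?s v mod p) mod p" by (simp add: mod_add_eq)
    also have "\<dots> = ((u + t) mod p + (v + t) mod p) mod p"
      using shift_mod[OF assms(1)] uv by simp
    also have "\<dots> = (u + t + (v + t)) mod p" by (metis mod_add_eq)
    also have "\<dots> = (u + v + (p - s) + p * (p - s)) mod p" by (simp only: eq)
    also have "\<dots> = (u + v + (p - s)) mod p" by simp
    finally have "(\<Sum>x\<in>e. ?s x) mod p = (u + v + (p - s)) mod p" .
    moreover have "\<Sum>e = u + v" using uv by simp
    ultimately show "((\<Sum>x\<in>e. ?s x) mod p = 0) = ((\<Sum>e) mod p = s)"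
      using mod_shift_zero[OF assms(4)] by simp
  qed
  finally show ?thesis by simp
qed

lemma partition:
  fixes p n :: nat and R :: "nat \<Rightarrow> bool"
  assumes "p dvd n" "n > 0" "odd p"
  shows "card {e \<in> complete_graph_edges n. R ((\<Sum>e) mod p)}
       = card {s \<in> {..<p}. R s} * card {e \<in> complete_graph_edges n. (\<Sum>e) mod p = 0}"
proof -
  let ?E = "complete_graph_edges n"
  let ?I = "{s \<in> {..<p}. R s}"
  have p0: "p > 0" using assms(3) by (rule odd_pos)
  have "{e \<in> ?E. R ((\<Sum>e) mod p)} = (\<Union>s\<in>?I. {e \<in> ?E. (\<Sum>e) mod p = s})"
  proof -
    have "\<And>e::nat set. (\<Sum>e) mod p < p" using p0 by simp
    then show ?thesis by blast
  qed
  then have "card {e \<in> ?E. R ((\<Sum>e) mod p)} = card (\<Union>s\<in>?I. {e \<in> ?E. (\<Sum>e) mod p = s})"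
    by simp
  also have "\<dots> = (\<Sum>s\<in>?I. card {e \<in> ?E. (\<Sum>e) mod p = s})"
    by (rule card_UN_disjoint) (simp, simp add: finite_E, blast)
  also have "\<dots> = (\<Sum>s\<in>?I. card {e \<in> ?E. (\<Sum>e) mod p = 0})"
  proof (rule sum.cong[OF refl])
    fix s assume "s \<in> ?I"
    then have "s < p" by simp
    then show "card {e \<in> ?E. (\<Sum>e) mod p = s} = card {e \<in> ?E. (\<Sum>e) mod p = 0}"
      by (rule uniform[OF assms])
  qed
  finally show ?thesis by simp
qed

lemma Legendre_cong:
  assumes "[a = b] (mod m)"
  shows "Legendre a m = Legendre b m"
proof -
  have "[a = 0] (mod m) \<longleftrightarrow> [b = 0] (mod m)"
    using cong_trans[OF cong_sym[OF assms]] cong_trans[OF assms] by blast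
  moreover have "QuadRes m a \<longleftrightarrow> QuadRes m b"
    unfolding QuadRes_def using cong_trans[OF _ cong_sym[OF assms]] cong_trans[OF _ assms] by blast
  ultimately show ?thesis unfolding Legendre_def by simp
qed

lemma Legendre_mod:
  "Legendre (int a) (int p) = Legendre (int (a mod p)) (int p)"
  by (rule Legendre_cong) (simp add: cong_def zmod_int)

lemma QR_card:
  fixes p :: nat
  assumes "prime p" "odd p"
  shows "card {s \<in> {..<p}. Legendre (int s) (int p) = 1} \<le> (p - 1) div 2"
proof -
  have sub: "{s \<in> {..<p}. Legendre (int s) (int p) = 1} \<subseteq> (\<lambda>x. x^2 mod p) ` {1..(p - 1) div 2}"
  proof
    fix s assume "s \<in> {s \<in> {..<p}. Legendre (int s) (int p) = 1}"
    then have sp: "s < p" and L: "Legendre (int s) (int p) = 1" by auto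
    have nz: "\<not> [int s = 0] (mod int p)" and QR: "QuadRes (int p) (int s)"
      using L unfolding Legendre_def by (auto split: if_splits)
    from QR obtain y where y: "[y^2 = int s] (mod int p)" unfolding QuadRes_def by blast
    define r where "r = y mod int p"
    have p1: "p > 1" using assms(1) prime_gt_1_nat by blast
    have r: "0 \<le> r" "r < int p" using p1 unfolding r_def by auto
    have "[r = y] (mod int p)" unfolding r_def by (simp add: cong_def)
    then have "[r^2 = y^2] (mod int p)" by (rule cong_pow)
    then have rs: "[r^2 = int s] (mod int p)" using y by (rule cong_trans)
    have "r \<noteq> 0" using rs nz by (auto simp: cong_sym_eq)
    define x where "x = (if r \<le> (int p - 1) div 2 then r else int p - r)"
    have "int p = 2 * ((int p - 1) div 2) + 1" using assms(2) by (auto elim!: oddE)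
    then have x: "1 \<le> x" "x \<le> (int p - 1) div 2" using r \<open>r \<noteq> 0\<close> unfolding x_def by auto
    have "[x^2 = r^2] (mod int p)"
    proof (cases "r \<le> (int p - 1) div 2")
      case True then show ?thesis unfolding x_def by simp
    next
      case False
      have "[int p - r = - r] (mod int p)" by (simp add: cong_def)
      then have "[(int p - r)^2 = (- r)^2] (mod int p)" by (rule cong_pow)
      then show ?thesis using False unfolding x_def by simp
    qed
    then have xs: "[x^2 = int s] (mod int p)" using rs by (rule cong_trans)
    define m where "m = nat x"
    have xm: "x = int m" using x unfolding m_def by simp
    have "int (m^2 mod p) = int s"
      using xs sp unfolding xm cong_def by (simp add: zmod_int)
    then have "m^2 mod p = s" by simp
    moreover have "m \<in> {1..(p - 1) div 2}"
      using x unfolding xm by (auto simp: zdiv_int of_nat_diff)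
    ultimately show "s \<in> (\<lambda>x. x^2 mod p) ` {1..(p - 1) div 2}" by blast
  qed
  have "card {s \<in> {..<p}. Legendre (int s) (int p) = 1} \<le> card ((\<lambda>x. x^2 mod p) ` {1..(p - 1) div 2})"
    by (rule card_mono[OF _ sub]) simp
  also have "\<dots> \<le> card {1..(p - 1) div 2}" by (rule card_image_le) simp
  finally show ?thesis by simp
qed


lemma edge_in:
  assumes "u \<in> {1..n}" "v \<in> {1..n}" "u \<noteq> v"
  shows "{u, v} \<in> complete_graph_edges n"
  using assms unfolding complete_graph_edges_def by blast

lemma two_zero_edges:
  fixes p q :: nat
  assumes "prime p" "odd p" "q > 0" "\<not> (q = 1 \<and> p = 3)"
  shows "2 \<le> card {e \<in> complete_graph_edges (q * p). (\<Sum>e) mod p = 0}"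
proof -
  let ?S = "{e \<in> complete_graph_edges (q * p). (\<Sum>e) mod p = 0}"
  have p2: "p \<ge> 2" using assms(1) prime_ge_2_nat by blast
  have p3: "p \<ge> 3"
  proof (rule ccontr)
    assume "\<not> p \<ge> 3" then have "p = 2" using p2 by simp
    then show False using assms(2) by simp
  qed
  have fin: "finite ?S" using finite_E by simp
  show ?thesis
  proof (cases "q = 1")
    case True
    then have "p \<noteq> 3" using assms(4) by simp
    moreover have "p \<noteq> 4" using assms(2) by auto
    ultimately have p5: "p \<ge> 5" using p3 by simp
    have a: "{1, p - 1} \<in> ?S"
    proof -
      have "{1, p - 1} \<in> complete_graph_edges (q * p)" using True p5 by (intro edge_in) auto
      moreover have "\<Sum>{1, p - 1} = p" using p5 by simp
      ultimately show ?thesis by simp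
    qed
    have b: "{2, p - 2} \<in> ?S"
    proof -
      have "{2, p - 2} \<in> complete_graph_edges (q * p)" using True p5 by (intro edge_in) auto
      moreover have "\<Sum>{2, p - 2} = p" using p5 by simp
      ultimately show ?thesis by simp
    qed
    have ne: "{1, p - 1} \<noteq> {2::nat, p - 2}"
    proof
      assume "{1, p - 1} = {2::nat, p - 2}"
      then have "(1::nat) \<in> {2, p - 2}" by blast
      then show False using p5 by auto
    qed
    have "card {{1, p - 1}, {2, p - 2}} = 2" using ne by simp
    moreover have "card {{1, p - 1}, {2, p - 2}} \<le> card ?S"
      using a b by (intro card_mono[OF fin] insert_subset[THEN iffD2] conjI empty_subsetI)
    ultimately show ?thesis by simp
  next
    case False
    then have q2: "q \<ge> 2" using assms(3) by simp
    have "2 * p \<le> q * p" using q2 by (rule mult_right_mono) simp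
    then have qp: "2 * p - 1 \<le> q * p" by linarith
    have a: "{1, p - 1} \<in> ?S"
    proof -
      have "{1, p - 1} \<in> complete_graph_edges (q * p)" using qp p3 q2 by (intro edge_in) auto
      moreover have "\<Sum>{1, p - 1} = p" using p3 by simp
      ultimately show ?thesis by simp
    qed
    have b: "{1, 2 * p - 1} \<in> ?S"
    proof -
      have "{1, 2 * p - 1} \<in> complete_graph_edges (q * p)" using qp p3 q2 by (intro edge_in) auto
      moreover have "\<Sum>{1, 2 * p - 1} = 2 * p" using p3 by simp
      ultimately show ?thesis by simp
    qed
    have ne: "{1, p - 1} \<noteq> {1::nat, 2 * p - 1}"
    proof
      assume "{1, p - 1} = {1::nat, 2 * p - 1}"
      then have "2 * p - 1 \<in> {1::nat, p - 1}" by blast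
      then show False using p3 by auto
    qed
    have "card {{1, p - 1}, {1, 2 * p - 1}} = 2" using ne by simp
    moreover have "card {{1, p - 1}, {1, 2 * p - 1}} \<le> card ?S"
      using a b by (intro card_mono[OF fin] insert_subset[THEN iffD2] conjI empty_subsetI)
    ultimately show ?thesis by simp
  qed
qed

lemma counts:
  fixes p q :: nat
  assumes "odd p" "q > 0" "bij_betw f {1..q * p} {1..q * p}"
  shows "num_edges_label p f (complete_graph_edges (q * p)) 1
           = card {s \<in> {..<p}. Legendre (int s) (int p) = 1}
             * card {e \<in> complete_graph_edges (q * p). (\<Sum>e) mod p = 0}"
    and "num_edges_label p f (complete_graph_edges (q * p)) 0
           = card {s \<in> {..<p}. \<not> Legendre (int s) (int p) = 1}
             * card {e \<in> complete_graph_edges (q * p). (\<Sum>e) mod p = 0}"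
proof -
  let ?E = "complete_graph_edges (q * p)"
  have p0: "p > 0" using assms(1) by (rule odd_pos)
  have dv: "p dvd q * p" by simp
  have n0: "q * p > 0" using p0 assms(2) by simp
  have "num_edges_label p f ?E 1 = card {e \<in> ?E. Legendre (int (\<Sum>x\<in>e. f x)) (int p) = 1}"
    unfolding num_edges_label_def edge_label_def by (intro arg_cong[where f=card] Collect_cong) auto
  also have "\<dots> = card {e \<in> ?E. Legendre (int (\<Sum>e)) (int p) = 1}"
    by (rule relabel[OF assms(3), where P = "\<lambda>m. Legendre (int m) (int p) = 1"])
  also have "\<dots> = card {e \<in> ?E. Legendre (int ((\<Sum>e) mod p)) (int p) = 1}"
    by (subst Legendre_mod) (rule refl)
  also have "\<dots> = card {s \<in> {..<p}. Legendre (int s) (int p) = 1}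
             * card {e \<in> ?E. (\<Sum>e) mod p = 0}"
    by (rule partition[OF dv n0 assms(1)])
  finally show "num_edges_label p f ?E 1 = card {s \<in> {..<p}. Legendre (int s) (int p) = 1}
             * card {e \<in> ?E. (\<Sum>e) mod p = 0}" .
  have "num_edges_label p f ?E 0 = card {e \<in> ?E. \<not> Legendre (int (\<Sum>x\<in>e. f x)) (int p) = 1}"
    unfolding num_edges_label_def edge_label_def by (intro arg_cong[where f=card] Collect_cong) auto
  also have "\<dots> = card {e \<in> ?E. \<not> Legendre (int (\<Sum>e)) (int p) = 1}"
    by (rule relabel[OF assms(3), where P = "\<lambda>m. \<not> Legendre (int m) (int p) = 1"])
  also have "\<dots> = card {e \<in> ?E. \<not> Legendre (int ((\<Sum>e) mod p)) (int p) = 1}"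
    by (subst Legendre_mod) (rule refl)
  also have "\<dots> = card {s \<in> {..<p}. \<not> Legendre (int s) (int p) = 1}
             * card {e \<in> ?E. (\<Sum>e) mod p = 0}"
    by (rule partition[OF dv n0 assms(1)])
  finally show "num_edges_label p f ?E 0 = card {s \<in> {..<p}. \<not> Legendre (int s) (int p) = 1}
             * card {e \<in> ?E. (\<Sum>e) mod p = 0}" .
qed


lemma card_split:
  fixes A :: "'a set"
  assumes "finite A"
  shows "card {x \<in> A. P x} + card {x \<in> A. \<not> P x} = card A"
proof -
  have "A = {x \<in> A. P x} \<union> {x \<in> A. \<not> P x}" by blast
  moreover have "card ({x \<in> A. P x} \<union> {x \<in> A. \<not> P x}) = card {x \<in> A. P x} + card {x \<in> A. \<not> P x}"
    by (rule card_Un_disjoint) (use assms in auto)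
  ultimately show ?thesis by simp
qed

lemma not_QR_3_2: "\<not> QuadRes 3 2"
proof
  assume "QuadRes 3 2"
  then obtain y :: int where "[y^2 = 2] (mod 3)" unfolding QuadRes_def by blast
  then have h: "(y mod 3)^2 mod 3 = 2" by (simp add: cong_def power_mod)
  have "y mod 3 = 0 \<or> y mod 3 = 1 \<or> y mod 3 = 2" by arith
  then show False using h by auto
qed

lemma E3: "complete_graph_edges 3 = {{1,2},{1,3},{2,3}}"
proof
  show "complete_graph_edges 3 \<subseteq> {{1,2},{1,3},{2,3}}"
  proof
    fix e assume "e \<in> complete_graph_edges 3"
    then obtain u v where uv: "e = {u,v}" "u \<in> {1..3}" "v \<in> {1..3}" "u \<noteq> v"
      by (rule E_cases)
    have "u = 1 \<or> u = 2 \<or> u = 3" "v = 1 \<or> v = 2 \<or> v = 3" using uv by auto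
    then show "e \<in> {{1,2},{1,3},{2,3}}" using uv by (auto simp: insert_commute)
  qed
  show "{{1,2},{1,3},{2,3}} \<subseteq> complete_graph_edges 3"
    by (auto intro!: edge_in)
qed

theorem corollary3p4:
  fixes p q :: nat
  assumes "prime p" and "odd p" and "q > 0"
  shows "legendre_cordial_graph p {1..q * p} (complete_graph_edges (q * p))
           \<longleftrightarrow> q = 1 \<and> p = 3"
proof
  assume "legendre_cordial_graph p {1..q * p} (complete_graph_edges (q * p))"
  then obtain f where bij0: "bij_betw f {1..q * p} {1..card {1..q * p}}"
    and bal: "\<bar>int (num_edges_label p f (complete_graph_edges (q * p)) 0)
               - int (num_edges_label p f (complete_graph_edges (q * p)) 1)\<bar> \<le> 1"
    unfolding legendre_cordial_graph_def legendre_cordial_labeling_def by blast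
  have bij: "bij_betw f {1..q * p} {1..q * p}" using bij0 by simp
  show "q = 1 \<and> p = 3"
  proof (rule ccontr)
    assume bad: "\<not> (q = 1 \<and> p = 3)"
    let ?cQ = "card {s \<in> {..<p}. Legendre (int s) (int p) = 1}"
    let ?cN = "card {s \<in> {..<p}. \<not> Legendre (int s) (int p) = 1}"
    let ?N = "card {e \<in> complete_graph_edges (q * p). (\<Sum>e) mod p = 0}"
    have c1: "num_edges_label p f (complete_graph_edges (q * p)) 1 = ?cQ * ?N"
      by (rule counts(1)[OF assms(2,3) bij])
    have c0: "num_edges_label p f (complete_graph_edges (q * p)) 0 = ?cN * ?N"
      by (rule counts(2)[OF assms(2,3) bij])
    have sp: "?cQ + ?cN = p" using card_split[of "{..<p}"] by simp
    have qb: "?cQ \<le> (p - 1) div 2" by (rule QR_card[OF assms(1,2)])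
    have "p = 2 * ((p - 1) div 2) + 1" using assms(2) by (auto elim!: oddE)
    then have "?cQ + 1 \<le> ?cN" using sp qb by linarith
    then have "(?cQ + 1) * ?N \<le> ?cN * ?N" by (rule mult_right_mono) simp
    then have "?cQ * ?N + ?N \<le> ?cN * ?N" by (simp add: algebra_simps)
    moreover have "2 \<le> ?N" by (rule two_zero_edges[OF assms bad])
    ultimately have "?cQ * ?N + 2 \<le> ?cN * ?N" by linarith
    then have "int (?cQ * ?N) + 2 \<le> int (?cN * ?N)" by linarith
    then show False using bal c0 c1 by linarith
  qed
next
  assume "q = 1 \<and> p = 3"
  then have q1: "q = 1" and p3: "p = 3" by auto
  have bij: "bij_betw id {1..q * p} {1..q * p}" by simp
  have L0: "Legendre (int 0) (int 3) = 0" by (simp add: Legendre_def)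
  have L1: "Legendre (int 1) (int 3) = 1"
  proof -
    have "QuadRes 3 1" unfolding QuadRes_def by (rule exI[of _ 1]) simp
    then show ?thesis by (simp add: Legendre_def cong_def)
  qed
  have L2: "Legendre (int 2) (int 3) = -1"
    using not_QR_3_2 by (simp add: Legendre_def cong_def)
  have lt3: "s < 3 \<Longrightarrow> s = 0 \<or> s = 1 \<or> s = 2" for s :: nat by arith
  have Q: "{s \<in> {..<3::nat}. Legendre (int s) (int 3) = 1} = {1}"
    using L0 L1 L2 by (auto dest: lt3)
  have NQ: "{s \<in> {..<3::nat}. \<not> Legendre (int s) (int 3) = 1} = {0, 2}"
    using L0 L1 L2 by (auto dest: lt3)
  have N: "{e \<in> complete_graph_edges 3. (\<Sum>e) mod 3 = 0} = {{1, 2}}"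
    unfolding E3 by auto
  have c1: "num_edges_label p id (complete_graph_edges (q * p)) 1 = 1"
    using counts(1)[OF assms(2,3) bij] unfolding q1 p3 mult_1 Q N by simp
  have c0: "num_edges_label p id (complete_graph_edges (q * p)) 0 = 2"
    using counts(2)[OF assms(2,3) bij] unfolding q1 p3 mult_1 NQ N by simp
  have "legendre_cordial_labeling p {1..q * p} (complete_graph_edges (q * p)) id"
    unfolding legendre_cordial_labeling_def using c0 c1 by simp
  then show "legendre_cordial_graph p {1..q * p} (complete_graph_edges (q * p))"
    unfolding legendre_cordial_graph_def by blast
qed

end
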